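(* Let $\Gamma=M\mathbb{Z}^n$ be a lattice in $\mathbb{R}^n$ (or $\mathbb{C}^n$), with $M$ an invertible real (or complex) $n\times n$ matrix, and let $A$ be a dilation matrix for $\Gamma$. Let $\mu'$ be the smallest singular value of $B=M^{-1}AM$, i.e. $\mu'=\min\{\|Ax\|_{l^2(\Gamma)}:\|x\|_{l^2(\Gamma)}=1\}$ where $\|\sum_i x_iMe_i\|_{l^2(\Gamma)}=(\sum_i|x_i|^2)^{1/2}$ for real coefficients $x_i$. If $\mu'>2$, then $A$ yields a radix representation of $\Gamma$ with digit set $D=A(F_\Gamma)\cap\Gamma$, $F_\Gamma=M([-\tfrac12,\tfrac12)^n)$: every $x\in\Gamma$ equals $\sum_{j=0}^NA^jd_j$ for some $N\ge0$ and $d_j\in D$.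
   Context: An integer dilation matrix is an $n\times n$ matrix with integer entries all of whose eigenvalues $\lambda$ satisfy $|\lambda|>1$. A matrix $A$ is a dilation matrix for $\Gamma=M\mathbb{Z}^n$ if $M^{-1}AM$ is an integer dilation matrix. $e_1,\dots,e_n$ is the standard basis of $\mathbb{Z}^n$. *)

theory Defs
  imports "HOL-Analysis.Analysis"
begin

definition lattice :: "real^'n^'n \<Rightarrow> (real^'n) set" where
  "lattice M = {M *v z | z. \<forall>i. z $ i \<in> \<int>}"

definition int_dilation :: "real^'n^'n \<Rightarrow> bool" where
  "int_dilation B \<longleftrightarrow> (\<forall>i j. B $ i $ j \<in> \<int>) \<and>
     (\<forall>c::complex. det (mat c - (\<chi> i j. complex_of_real (B $ i $ j))) = 0 \<longrightarrow> norm c > 1)"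

definition dilation_for :: "real^'n^'n \<Rightarrow> real^'n^'n \<Rightarrow> bool" where
  "dilation_for M A \<longleftrightarrow> int_dilation (matrix_inv M ** A ** M)"

text \<open>The norm on l^2(\<Gamma>): norm of sum x_i M e_i is the Euclidean norm of the coefficient vector x.\<close>
definition gamma_norm :: "real^'n^'n \<Rightarrow> real^'n \<Rightarrow> real" where
  "gamma_norm M y = norm (matrix_inv M *v y)"

definition mu' :: "real^'n^'n \<Rightarrow> real^'n^'n \<Rightarrow> real" where
  "mu' M A = Inf {gamma_norm M (A *v y) | y. gamma_norm M y = 1}"

definition fund_dom :: "real^'n^'n \<Rightarrow> (real^'n) set" where
  "fund_dom M = (\<lambda>x. M *v x) ` {x. \<forall>i. -1/2 \<le> x $ i \<and> x $ i < 1/2}"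

definition digits :: "real^'n^'n \<Rightarrow> real^'n^'n \<Rightarrow> (real^'n) set" where
  "digits M A = (\<lambda>x. A *v x) ` fund_dom M \<inter> lattice M"

end

theory Submission
  imports Defs
begin

lemma minv_props:
  fixes M :: "real^'n^'n"
  assumes "invertible M"
  shows "M ** matrix_inv M = mat 1" "matrix_inv M ** M = mat 1"
  using someI_ex[OF assms[unfolded invertible_def]] unfolding matrix_inv_def by auto

lemma round_props:
  fixes t :: real
  shows "\<bar>real_of_int \<lfloor>t + 1/2\<rfloor>\<bar> \<le> 2 * \<bar>t\<bar>"
    and "-1/2 \<le> t - real_of_int \<lfloor>t + 1/2\<rfloor>"
    and "t - real_of_int \<lfloor>t + 1/2\<rfloor> < 1/2"
proof -
  have a: "real_of_int \<lfloor>t + 1/2\<rfloor> \<le> t + 1/2" by (rule of_int_floor_le)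
  have b: "t + 1/2 < real_of_int \<lfloor>t + 1/2\<rfloor> + 1" by (rule real_of_int_floor_add_one_gt)
  show "-1/2 \<le> t - real_of_int \<lfloor>t + 1/2\<rfloor>" using a by linarith
  show "t - real_of_int \<lfloor>t + 1/2\<rfloor> < 1/2" using b by linarith
  show "\<bar>real_of_int \<lfloor>t + 1/2\<rfloor>\<bar> \<le> 2 * \<bar>t\<bar>"
  proof (cases "\<bar>t\<bar> < 1/2")
    case True
    then have "\<lfloor>t + 1/2\<rfloor> = 0" by (simp add: floor_eq_iff) linarith
    then show ?thesis by simp
  next
    case False
    then show ?thesis using a b by linarith
  qed
qed

lemma norm_sq_int:
  fixes z :: "real^'n"
  assumes "\<forall>i. z $ i \<in> \<int>"
  shows "norm z ^ 2 \<in> \<int>"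
proof -
  have "norm z ^ 2 = (\<Sum>i\<in>UNIV. z $ i * z $ i)"
    by (simp add: power2_norm_eq_inner inner_vec_def)
  also have "\<dots> \<in> \<int>" using assms by (intro Ints_sum Ints_mult) auto
  finally show ?thesis .
qed

lemma nat_floor_less:
  fixes a b :: real
  assumes "a \<in> \<int>" "b \<in> \<int>" "a < b" "0 \<le> a"
  shows "nat \<lfloor>a\<rfloor> < nat \<lfloor>b\<rfloor>"
proof -
  obtain i where i: "a = of_int i" using assms(1) Ints_cases by blast
  obtain j where j: "b = of_int j" using assms(2) Ints_cases by blast
  show ?thesis using assms(3,4) unfolding i j by simp
qed

lemma combine_step:
  fixes A :: "real^'n^'n"
  assumes "d \<in> D" "\<forall>j\<le>N. e j \<in> D"
  shows "\<exists>N'::nat. \<exists>d'::nat \<Rightarrow> real^'n. (\<forall>j\<le>N'. d' j \<in> D) \<and>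
     d + A *v (\<Sum>j\<le>N. ((\<lambda>v. A *v v) ^^ j) (e j)) = (\<Sum>j\<le>N'. ((\<lambda>v. A *v v) ^^ j) (d' j))"
proof (intro exI conjI)
  let ?d' = "\<lambda>j. case j of 0 \<Rightarrow> d | Suc k \<Rightarrow> e k"
  show "\<forall>j\<le>Suc N. ?d' j \<in> D" using assms by (auto split: nat.splits)
  have "A *v (\<Sum>j\<le>N. ((\<lambda>v. A *v v) ^^ j) (e j)) = (\<Sum>j\<le>N. A *v (((\<lambda>v. A *v v) ^^ j) (e j)))"
    using linear_sum[OF matrix_vector_mul_linear, of A] by (simp add: o_def)
  then show "d + A *v (\<Sum>j\<le>N. ((\<lambda>v. A *v v) ^^ j) (e j)) = (\<Sum>j\<le>Suc N. ((\<lambda>v. A *v v) ^^ j) (?d' j))"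
    by (simp add: sum.atMost_Suc_shift del: sum.atMost_Suc)
qed

theorem mainTheorem10:
  fixes M A :: "real^'n^'n"
  assumes "invertible M"
    and "dilation_for M A"
    and "mu' M A > 2"
  shows "\<forall>x \<in> lattice M. \<exists>N::nat. \<exists>d::nat \<Rightarrow> real^'n.
           (\<forall>j\<le>N. d j \<in> digits M A) \<and> x = (\<Sum>j\<le>N. ((\<lambda>v. A *v v) ^^ j) (d j))"
proof -
  define Mi where "Mi = matrix_inv M"
  define B where "B = Mi ** A ** M"
  define \<mu> where "\<mu> = mu' M A"
  define P where "P = (\<lambda>x. \<exists>N::nat. \<exists>d::nat \<Rightarrow> real^'n.
           (\<forall>j\<le>N. d j \<in> digits M A) \<and> x = (\<Sum>j\<le>N. ((\<lambda>v. A *v v) ^^ j) (d j)))"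
  have MMi: "M ** Mi = mat 1" and MiM: "Mi ** M = mat 1"
    using minv_props[OF assms(1)] unfolding Mi_def by auto
  have gn: "gamma_norm M y = norm (Mi *v y)" for y unfolding gamma_norm_def Mi_def by simp
  have Bint: "\<forall>i j. B $ i $ j \<in> \<int>"
    using assms(2) unfolding dilation_for_def int_dilation_def B_def Mi_def by auto
  have AM: "A *v (M *v v) = M *v (B *v v)" for v
  proof -
    have "M ** B = (M ** Mi) ** A ** M" unfolding B_def by (simp add: matrix_mul_assoc)
    then have "M ** B = A ** M" using MMi by simp
    then show ?thesis by (simp add: matrix_vector_mul_assoc)
  qed
  have gn0: "y = 0" if "gamma_norm M y = 0" for y
  proof -
    have "Mi *v y = 0" using that gn by simp
    then have "M *v (Mi *v y) = 0" by simp
    then show ?thesis using MMi by (simp add: matrix_vector_mul_assoc)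
  qed
  have bound: "\<mu> * gamma_norm M y \<le> gamma_norm M (A *v y)" for y
  proof (cases "gamma_norm M y = 0")
    case True
    then show ?thesis by (simp add: gamma_norm_def)
  next
    case False
    define c where "c = gamma_norm M y"
    have cpos: "c > 0" using False unfolding c_def gamma_norm_def by simp
    define y' where "y' = (1/c) *\<^sub>R y"
    have "gamma_norm M y' = 1"
      using cpos unfolding y'_def gn c_def by (simp add: matrix_vector_mult_scaleR)
    then have mem: "gamma_norm M (A *v y') \<in> {gamma_norm M (A *v y) | y. gamma_norm M y = 1}" by blast
    have "\<mu> \<le> gamma_norm M (A *v y')"
      unfolding \<mu>_def mu'_def
      by (rule cInf_lower[OF mem]) (auto simp: bdd_below_def gamma_norm_def intro!: exI[of _ 0])
    also have "\<dots> = gamma_norm M (A *v y) / c"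
      using cpos unfolding y'_def gn by (simp add: matrix_vector_mult_scaleR)
    finally show ?thesis using cpos unfolding c_def by (simp add: field_simps)
  qed
  have injA: "inj ((*v) A)"
  proof (rule injI)
    fix y y' assume "A *v y = A *v y'"
    then have "A *v (y - y') = 0" by (simp add: matrix_vector_mult_diff_distrib)
    then have "\<mu> * gamma_norm M (y - y') \<le> 0" using bound[of "y - y'"] by (simp add: gamma_norm_def)
    moreover have "gamma_norm M (y - y') \<ge> 0" by (simp add: gamma_norm_def)
    ultimately have "gamma_norm M (y - y') = 0" using assms(3) unfolding \<mu>_def
      by (meson less_le mult_le_0_iff not_less order_le_less_trans zero_less_numeral)
    then have "y - y' = 0" using gn0 by blast
    then show "y = y'" by simp
  qed
  have surjA: "surj ((*v) A)"
    using linear_injective_imp_surjective[OF matrix_vector_mul_linear injA] by blast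
  have main: "P (M *v z)" if "\<forall>i. z $ i \<in> \<int>" for z
    using that
  proof (induction "nat \<lfloor>norm z ^ 2\<rfloor>" arbitrary: z rule: less_induct)
    case less
    define x where "x = M *v z"
    obtain u where u: "A *v u = x" using surjA by (metis surjD)
    define w where "w = Mi *v u"
    define q :: "real^'n" where "q = (\<chi> i. real_of_int \<lfloor>w $ i + 1/2\<rfloor>)"
    define d where "d = x - A *v (M *v q)"
    have qint: "\<forall>i. q $ i \<in> \<int>" unfolding q_def by simp
    have Mw: "M *v w = u" unfolding w_def using MMi by (simp add: matrix_vector_mul_assoc)
    have d_eq: "d = A *v (M *v (w - q))"
      unfolding d_def using u Mw by (simp add: matrix_vector_mult_diff_distrib)
    have box: "w - q \<in> {x. \<forall>i. -1/2 \<le> x $ i \<and> x $ i < 1/2}"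
      unfolding q_def using round_props(2,3) by auto
    have dF: "d \<in> (\<lambda>x. A *v x) ` fund_dom M"
      unfolding fund_dom_def d_eq using box by blast
    have Bq: "(B *v q) $ i \<in> \<int>" for i
      unfolding matrix_vector_mult_def using Bint qint by (auto intro!: Ints_sum Ints_mult)
    have "d = M *v (z - B *v q)"
      unfolding d_def x_def AM by (simp add: matrix_vector_mult_diff_distrib)
    moreover have "\<forall>i. (z - B *v q) $ i \<in> \<int>" using less.prems Bq by auto
    ultimately have dL: "d \<in> lattice M" unfolding lattice_def by blast
    have dD: "d \<in> digits M A" unfolding digits_def using dF dL by blast
    have xdec: "x = d + A *v (M *v q)" unfolding d_def by simp
    show ?case
    proof (cases "q = 0")
      case True
      then have "x = d" using xdec by simp
      then show ?thesis unfolding P_def x_def[symmetric]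
        using dD by (intro exI[of _ 0] exI[of _ "\<lambda>_. d"]) auto
    next
      case False
      have "norm q \<le> norm (2 *\<^sub>R w)"
        proof (rule norm_le_componentwise_cart)
        fix i
        have "\<bar>q $ i\<bar> \<le> 2 * \<bar>w $ i\<bar>" unfolding q_def using round_props(1) by simp
        also have "\<dots> = \<bar>(2 *\<^sub>R w) $ i\<bar>" by simp
        finally show "norm (q $ i) \<le> norm ((2 *\<^sub>R w) $ i)" by simp
      qed
      then have nq: "norm q \<le> 2 * norm w" by simp
      have "gamma_norm M x = norm z" unfolding gn x_def using MiM by (simp add: matrix_vector_mul_assoc)
      then have "\<mu> * norm w \<le> norm z" using bound[of u] u unfolding gn w_def by simp
      moreover have "\<mu> > 2" using assms(3) \<mu>_def by simp
      moreover have "norm q > 0" using False by simp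
      ultimately have mw: "\<mu> * norm w \<le> norm z" "\<mu> > 2" "norm q > 0" by blast+
      have wpos: "norm w > 0" using nq mw(3) by linarith
      have "2 * norm w < \<mu> * norm w" using mw(2) wpos by simp
      then have "norm q < norm z" using nq mw(1) by linarith
      then have "norm q ^ 2 < norm z ^ 2" by (simp add: power_strict_mono)
      then have "nat \<lfloor>norm q ^ 2\<rfloor> < nat \<lfloor>norm z ^ 2\<rfloor>"
        using norm_sq_int[OF qint] norm_sq_int[OF less.prems] by (intro nat_floor_less) auto
      then have "P (M *v q)" using less.hyps qint by blast
      then obtain N e where e: "\<forall>j\<le>N. e j \<in> digits M A"
        "M *v q = (\<Sum>j\<le>N. ((\<lambda>v. A *v v) ^^ j) (e j))" unfolding P_def by blast
      from combine_step[OF dD e(1), of A] show ?thesis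
        unfolding P_def x_def[symmetric] xdec e(2) by metis
    qed
  qed
  have "\<forall>x\<in>lattice M. P x"
  proof
    fix x assume "x \<in> lattice M"
    then obtain z where "x = M *v z" "\<forall>i. z $ i \<in> \<int>" unfolding lattice_def by blast
    then show "P x" using main by simp
  qed
  then show ?thesis unfolding P_def .
qed

end
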